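(* There are no rotational $W$-translators in $\mathrm{SL}(2,\mathbb R)$ with constant mean curvature, where $W=\frac12(x^2-y^2)\partial_x+xy\partial_y$.
   Context: $\mathrm{SL}(2,\mathbb R)$ is given global coordinates $(x,y,\theta)\in\mathbb R\times(0,\infty)\times\mathbb R$ via $(x,y,\theta)\mapsto \begin{pmatrix}1&x\\0&1\end{pmatrix}\begin{pmatrix}\sqrt y&0\\0&1/\sqrt y\end{pmatrix}\begin{pmatrix}\cos\theta&\sin\theta\\-\sin\theta&\cos\theta\end{pmatrix}$, with the metric $\langle\,,\rangle=\frac{dx^2+dy^2}{4y^2}+\left(d\theta+\frac{dx}{2y}\right)^2$. Orthonormal frame: $e_1=2y\partial_x-\partial_\theta$, $e_2=2y\partial_y$, $e_3=\partial_\theta$; $W=\frac{1}{2y}\big(\frac12(x^2-y^2)e_1+xye_2+\frac12(x^2-y^2)e_3\big)$. A surface with unit normal $N$ and mean curvature $H$ (average of principal curvatures w.r.t. $N$) is a $W$-translator if $H=\langle N,W\rangle$. Rotational surfaces are those parametrized as $(s,t)\mapsto(x(s),y(s),t)$ with generating curve $(x(s),y(s))$; when $x'=2y\cos\varphi$, $y'=2y\sin\varphi$ (arclength parametrization in the hyperbolic plane $\frac{dx^2+dy^2}{4y^2}$), $N=-\sin\varphi\,e_1+\cos\varphi\,e_2$ and $H=\frac{\varphi'}{2}+\cos\varphi$. *)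

theory Defs
  imports "HOL-Analysis.Analysis"
begin

text \<open>Tangent vectors of SL(2,R) are recorded by their coefficients (a1,a2,a3)
w.r.t. the orthonormal frame e1 = 2y d/dx - d/dtheta, e2 = 2y d/dy, e3 = d/dtheta.\<close>

definition frame_inner :: "real \<times> real \<times> real \<Rightarrow> real \<times> real \<times> real \<Rightarrow> real" where
  "frame_inner u v = fst u * fst v + fst (snd u) * fst (snd v) + snd (snd u) * snd (snd v)"

text \<open>W = 1/(2y) ( 1/2 (x^2-y^2) e1 + x y e2 + 1/2 (x^2-y^2) e3 )
  = 1/2 (x^2-y^2) d/dx + x y d/dy, at the point (x,y,theta).\<close>
definition W_field :: "real \<Rightarrow> real \<Rightarrow> real \<times> real \<times> real" where
  "W_field x y = ((1 / (2*y)) * ((x^2 - y^2) / 2), (1 / (2*y)) * (x*y), (1 / (2*y)) * ((x^2 - y^2) / 2))"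

text \<open>Unit normal of the rotational surface (s,t) -> (x(s),y(s),t): N = - sin phi e1 + cos phi e2.\<close>
definition rot_normal :: "real \<Rightarrow> real \<times> real \<times> real" where
  "rot_normal \<phi> = (- sin \<phi>, cos \<phi>, 0)"

definition rot_mean_curv :: "real \<Rightarrow> real \<Rightarrow> real" where
  "rot_mean_curv \<phi> \<phi>' = \<phi>' / 2 + cos \<phi>"

text \<open>A rotational surface whose generating curve (x(s),y(s)), s in the open interval (a,b),
is parametrized by hyperbolic arclength with angle function phi:
x' = 2y cos phi, y' = 2y sin phi, y > 0, phi differentiable with derivative phi'.\<close>
definition rot_surface ::
  "real \<Rightarrow> real \<Rightarrow> (real \<Rightarrow> real) \<Rightarrow> (real \<Rightarrow> real) \<Rightarrow> (real \<Rightarrow> real) \<Rightarrow> (real \<Rightarrow> real) \<Rightarrow> bool" where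
  "rot_surface a b x y \<phi> \<phi>' \<longleftrightarrow> a < b \<and>
     (\<forall>s\<in>{a<..<b}. y s > 0 \<and>
        (x has_real_derivative (2 * y s * cos (\<phi> s))) (at s) \<and>
        (y has_real_derivative (2 * y s * sin (\<phi> s))) (at s) \<and>
        (\<phi> has_real_derivative \<phi>' s) (at s))"

definition rot_W_translator ::
  "real \<Rightarrow> real \<Rightarrow> (real \<Rightarrow> real) \<Rightarrow> (real \<Rightarrow> real) \<Rightarrow> (real \<Rightarrow> real) \<Rightarrow> (real \<Rightarrow> real) \<Rightarrow> bool" where
  "rot_W_translator a b x y \<phi> \<phi>' \<longleftrightarrow> rot_surface a b x y \<phi> \<phi>' \<and>
     (\<forall>s\<in>{a<..<b}. rot_mean_curv (\<phi> s) (\<phi>' s) = frame_inner (rot_normal (\<phi> s)) (W_field (x s) (y s)))"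

end

theory Submission imports Defs begin
lemma dF: assumes "(x has_real_derivative X) (at s)" "(y has_real_derivative Y) (at s)" "(\<phi> has_real_derivative P) (at s)" "y s \<noteq> 0"
shows "((\<lambda>s. - sin (\<phi> s) * ((x s)^2 - (y s)^2) / (4 * y s) + x s * cos (\<phi> s) / 2) has_real_derivative
 (- cos(\<phi> s)*P*((x s)^2-(y s)^2)/(4*y s) - sin(\<phi> s)*(((2*x s*X - 2*y s*Y)*(4*y s) - ((x s)^2-(y s)^2)*(4*Y))/(4*y s)^2) + X*cos(\<phi> s)/2 - x s * sin (\<phi> s) * P / 2)) (at s)"
  using assms by (auto intro!: derivative_eq_intros simp: field_simps power2_eq_square)

lemma dR: assumes "(x has_real_derivative X) (at s)" "(y has_real_derivative Y) (at s)" "y s \<noteq> 0"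
shows "((\<lambda>s. ((x s)^2 + (y s)^2) / (4 * y s)) has_real_derivative
 (((2*x s*X + 2*y s*Y)*(4*y s) - ((x s)^2+(y s)^2)*(4*Y))/(4*y s)^2)) (at s)"
  using assms by (auto intro!: derivative_eq_intros simp: field_simps power2_eq_square)

lemma alg:
  fixes x y S C c :: real
  assumes y: "y > 0" and sc: "S^2 + C^2 = 1"
   and hc: "c = - S  *  (x^2 - y^2) / (4  *  y) + x  *  C / 2"
   and d0: "- C * (2 * (c-C)) * (x^2-y^2)/(4 * y) - S * (((2 * x * (2 * y * C) - 2 * y * (2 * y * S)) * (4 * y) - (x^2-y^2) * (4 * (2 * y * S)))/(4 * y)^2) + (2 * y * C) * C/2 - x * S * (2 * (c-C))/2 = 0"
  shows "((x^2+y^2)/(4 * y))^2  *  (c^2 - 1) = c^4 \<and> (x^2+y^2)/(4 * y) > 0"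
proof -
  define u where "u = (x^2-y^2)/(4 * y)"
  define v where "v = x/2"
  define r where "r = (x^2+y^2)/(4 * y)"
  define d where "d = u * C + v * S"
  have r2: "r^2 = u^2 + v^2" unfolding r_def u_def v_def using y by (simp add: field_simps power2_eq_square)
  have cu: "c = v * C - u * S" using hc y unfolding u_def v_def by (simp add: field_simps)
  have cd2: "c^2 + d^2 = r^2" unfolding r2 cu d_def using sc by algebra
  have "(2 * x * (2 * y * C) - 2 * y * (2 * y * S)) * (4 * y) - (x^2-y^2) * (4 * (2 * y * S)) = (4 * y)^2  *  (x * C - y * S - 2 * u * S)"
    unfolding u_def using y by (simp add: field_simps power2_eq_square)
  hence q: "((2 * x * (2 * y * C) - 2 * y * (2 * y * S)) * (4 * y) - (x^2-y^2) * (4 * (2 * y * S))) / (4 * y)^2 = x * C - y * S - 2 * u * S"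
    using y by simp
  have q1: "- C * (2 * (c-C)) * (x^2-y^2) / (4 * y) = - C * (2 * (c-C)) * u" unfolding u_def by simp
  have q2: "x * S * (2 * (c-C)) / 2 = v * S * (2 * (c-C))" unfolding v_def by simp
  have "- C * (2 * (c-C)) * u - S * (x * C - y * S - 2 * u * S) + y * C * C - v * S * (2 * (c-C)) = 0"
    using d0 unfolding q q1 q2 by simp
  hence "-2 * c * d + 2 * u * (C^2+S^2) + y * (C^2+S^2) = 0" unfolding d_def v_def by (simp add: algebra_simps power2_eq_square)
  hence "-2 * c * d + 2 * u + y = 0" using sc by (metis add.commute mult.right_neutral)
  hence "c * d = u + y/2" by simp
  moreover have "u + y/2 = r" unfolding u_def r_def using y by (simp add: field_simps power2_eq_square)
  ultimately have crd: "c * d = r" by simp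
  have "c^2 * d^2 = r^2" using crd by (metis power_mult_distrib)
  moreover have "d^2 = r^2 - c^2" using cd2 by simp
  ultimately have "c^2 * (r^2-c^2) = r^2" by simp
  hence "r^2 * (c^2-1) = c^4" by (simp add: algebra_simps power4_eq_xxxx power2_eq_square)
  moreover have "r > 0" unfolding r_def using y by (simp add: add_pos_nonneg sum_power2_gt_zero_iff) 
  ultimately show ?thesis unfolding r_def by simp
qed

lemma FI: "y \<noteq> 0 \<Longrightarrow> frame_inner (rot_normal p) (W_field x y) = - sin p * (x^2 - y^2) / (4 * y) + x * cos p / 2"
  unfolding frame_inner_def rot_normal_def W_field_def by (simp add: field_simps power2_eq_square)

theorem mainTheorem6:
  fixes a b :: real and x y \<phi> \<phi>' :: "real \<Rightarrow> real"
  assumes "rot_W_translator a b x y \<phi> \<phi>'"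
  shows "\<not> (\<exists>c. \<forall>s\<in>{a<..<b}. rot_mean_curv (\<phi> s) (\<phi>' s) = c)"
proof
  assume "\<exists>c. \<forall>s\<in>{a<..<b}. rot_mean_curv (\<phi> s) (\<phi>' s) = c"
  then obtain c where hc: "\<And>s. s \<in> {a<..<b} \<Longrightarrow> rot_mean_curv (\<phi> s) (\<phi>' s) = c" by blast
  have ab: "a < b" and hs: "\<And>s. s \<in> {a<..<b} \<Longrightarrow> y s > 0 \<and>
        (x has_real_derivative (2 * y s * cos (\<phi> s))) (at s) \<and>
        (y has_real_derivative (2 * y s * sin (\<phi> s))) (at s) \<and>
        (\<phi> has_real_derivative \<phi>' s) (at s)"
   and tr: "\<And>s. s \<in> {a<..<b} \<Longrightarrow> rot_mean_curv (\<phi> s) (\<phi>' s) = frame_inner (rot_normal (\<phi> s)) (W_field (x s) (y s))"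
    using assms unfolding rot_W_translator_def rot_surface_def by auto
  define F where "F = (\<lambda>s. - sin (\<phi> s) * ((x s)^2 - (y s)^2) / (4 * y s) + x s * cos (\<phi> s) / 2)"
  define R where "R = (\<lambda>s. ((x s)^2 + (y s)^2) / (4 * y s))"
  have Fc: "F s = c" if "s \<in> {a<..<b}" for s
    using hc[OF that] tr[OF that] FI[of "y s" "\<phi> s" "x s"] hs[OF that] unfolding F_def by simp
  have key: "(R s)^2 * (c^2 - 1) = c^4 \<and> R s > 0 \<and> (R has_real_derivative 2 * c) (at s)" if s: "s \<in> {a<..<b}" for s
  proof -
    from hs[OF s] have y0: "y s > 0" and dx: "(x has_real_derivative (2 * y s * cos (\<phi> s))) (at s)"
      and dy: "(y has_real_derivative (2 * y s * sin (\<phi> s))) (at s)" and dp: "(\<phi> has_real_derivative \<phi>' s) (at s)" by auto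
    have php: "\<phi>' s = 2 * (c - cos (\<phi> s))" using hc[OF s] unfolding rot_mean_curv_def by simp
    note D = dF[OF dx dy dp, unfolded php]
    have D0: "(F has_real_derivative 0) (at s)"
      by (rule has_field_derivative_transform_within_open[of "\<lambda>_. c" 0 s "{a<..<b}"])
         (use s Fc in auto)
    have Deq: "- cos (\<phi> s) * (2 * (c - cos (\<phi> s))) * ((x s)\<^sup>2 - (y s)\<^sup>2) / (4 * y s) -
      sin (\<phi> s) * (((2 * x s * (2 * y s * cos (\<phi> s)) - 2 * y s * (2 * y s * sin (\<phi> s))) * (4 * y s) -
       ((x s)\<^sup>2 - (y s)\<^sup>2) * (4 * (2 * y s * sin (\<phi> s)))) / (4 * y s)\<^sup>2) +
      2 * y s * cos (\<phi> s) * cos (\<phi> s) / 2 - x s * sin (\<phi> s) * (2 * (c - cos (\<phi> s))) / 2 = 0"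
      using DERIV_unique[OF D[folded F_def] D0] y0 by simp
    have hcF: "c = - sin (\<phi> s) * ((x s)^2 - (y s)^2) / (4 * y s) + x s * cos (\<phi> s) / 2"
      using Fc[OF s] unfolding F_def by simp
    have A: "(R s)^2 * (c^2 - 1) = c^4 \<and> R s > 0"
      using alg[OF y0 sin_cos_squared_add hcF Deq] unfolding R_def by simp
    have DR: "(R has_real_derivative (((2 * x s * (2 * y s * cos (\<phi> s)) + 2 * y s * (2 * y s * sin (\<phi> s))) * (4 * y s) -
      ((x s)\<^sup>2 + (y s)\<^sup>2) * (4 * (2 * y s * sin (\<phi> s)))) / (4 * y s)\<^sup>2)) (at s)"
      unfolding R_def using dR[OF dx dy] y0 by simp
    have "(((2 * x s * (2 * y s * cos (\<phi> s)) + 2 * y s * (2 * y s * sin (\<phi> s))) * (4 * y s) -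
      ((x s)\<^sup>2 + (y s)\<^sup>2) * (4 * (2 * y s * sin (\<phi> s)))) / (4 * y s)\<^sup>2) = 2 * c"
      unfolding hcF using y0 by (simp add: field_simps power2_eq_square)
    with DR A show ?thesis by simp
  qed
  define s1 where "s1 = a + (b - a) / 3"
  define s2 where "s2 = a + 2 * (b - a) / 3"
  have s1: "s1 \<in> {a<..<b}" and s2: "s2 \<in> {a<..<b}" and s12: "s1 < s2"
    using ab unfolding s1_def s2_def by (auto simp: field_simps)
  obtain z where z: "s1 < z" "z < s2" "R s2 - R s1 = (s2 - s1) * (2 * c)"
    using MVT2[OF s12, of R "\<lambda>_. 2 * c"] key s1 s2 by (metis greaterThanLessThan_iff le_less_trans less_le_trans)
  have c0: "c \<noteq> 0"
  proof
    assume "c = 0"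
    with key[OF s1] show False by auto
  qed
  have c1: "c^2 - 1 \<noteq> 0"
  proof
    assume "c^2 - 1 = 0"
    with key[OF s1] c0 show False by simp
  qed
  have "(R s1)^2 = (R s2)^2" using key[OF s1] key[OF s2] c1
    by (metis mult_right_cancel)
  hence "R s1 = R s2" using key[OF s1] key[OF s2] by (simp add: power2_eq_iff)
  with z s12 c0 show False by simp
qed

end
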